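(* Let $d,k\ge 1$, $0<\alpha<1$, $v>0$, and let $S=\{(\mathbf{x}_1,y_1),\dots,(\mathbf{x}_n,y_n)\}\subseteq \mathcal{X}\times\mathcal{Y}$, where $\mathcal{X}=\{\mathbf{x}\in\mathbb{R}^d:\|\mathbf{x}\|\le 1\}$ and $\mathcal{Y}=\{\pm1\}$, be such that there is $\mathbf{w}^*\in\mathbb{R}^d$ with $y_i\langle \mathbf{w}^*,\mathbf{x}_i\rangle\ge 1$ for all $i$. Consider, as a function of $W\in\mathbb{R}^{2k\times d}$, the loss $$L_S(W)=\frac1n\sum_{i=1}^n \max\{1-y_iN_W(\mathbf{x}_i),0\},\qquad N_W(\mathbf{x})=\mathbf{v}^\top\sigma(W\mathbf{x}),$$ where $\sigma(z)=\max\{\alpha z,z\}$ is applied entrywise and $\mathbf{v}=(v,\dots,v,-v,\dots,-v)\in\mathbb{R}^{2k}$ ($k$ entries equal to $v$ followed by $k$ entries equal to $-v$). Then (1) every critical point of $L_S$ is a global minimum of $L_S$; and (2) $L_S$ is not convex.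
   Context: Gradients are computed with the convention $\sigma'(z)=1$ for $z\ge 0$ and $\sigma'(z)=\alpha$ for $z<0$, and for a single example $(\mathbf{x},y)$ the gradient of $\max\{1-yN_W(\mathbf{x}),0\}$ is taken to be $0$ when $yN_W(\mathbf{x})\ge 1$; when $yN_W(\mathbf{x})<1$ its gradient with respect to the $j$-th row $\mathbf{w}_j$ of $W$ is $-y\,v_j\,\sigma'(\langle \mathbf{w}_j,\mathbf{x}\rangle)\,\mathbf{x}$. The gradient of $L_S$ is the average of these per-example gradients, and a critical point is a $W$ where this gradient is zero. The minimum value of $L_S$ is $0$. *)

theory Defs
  imports "HOL-Analysis.Analysis"
begin

definition leaky :: "real \<Rightarrow> real \<Rightarrow> real" where
  "leaky \<alpha> z = max (\<alpha> * z) z"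

definition leaky_deriv :: "real \<Rightarrow> real \<Rightarrow> real" where
  "leaky_deriv \<alpha> z = (if z \<ge> 0 then 1 else \<alpha>)"

text \<open>Output weights: hidden units indexed by 'k + 'k (2k units, k = CARD('k));
  the first k (Inl) get weight v, the last k (Inr) get weight -v.\<close>
definition outw :: "real \<Rightarrow> 'k + 'k \<Rightarrow> real" where
  "outw v j = (case j of Inl _ \<Rightarrow> v | Inr _ \<Rightarrow> - v)"

definition net :: "real \<Rightarrow> real \<Rightarrow> real^'d^('k::finite + 'k) \<Rightarrow> real^'d \<Rightarrow> real" where
  "net \<alpha> v W x = (\<Sum>j\<in>UNIV. outw v j * leaky \<alpha> (W $ j \<bullet> x))"

definition loss :: "real \<Rightarrow> real \<Rightarrow> ((real^'d) \<times> real) list \<Rightarrow> real^'d^('k::finite + 'k) \<Rightarrow> real" where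
  "loss \<alpha> v S W = (1 / real (length S)) *
     (\<Sum>(x, y)\<leftarrow>S. max (1 - y * net \<alpha> v W x) 0)"

definition loss_grad :: "real \<Rightarrow> real \<Rightarrow> ((real^'d) \<times> real) list \<Rightarrow> real^'d^('k::finite + 'k) \<Rightarrow> real^'d^('k + 'k)" where
  "loss_grad \<alpha> v S W = (\<chi> j. (1 / real (length S)) *\<^sub>R
     (\<Sum>(x, y)\<leftarrow>S. (if y * net \<alpha> v W x < 1
        then (- y * outw v j * leaky_deriv \<alpha> (W $ j \<bullet> x)) *\<^sub>R x else 0)))"

definition critical_point :: "real \<Rightarrow> real \<Rightarrow> ((real^'d) \<times> real) list \<Rightarrow> real^'d^('k::finite + 'k) \<Rightarrow> bool" where
  "critical_point \<alpha> v S W \<longleftrightarrow> loss_grad \<alpha> v S W = 0"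

end

theory Submission
  imports Defs
begin

lemma leaky_deriv_pos: "0 < \<alpha> \<Longrightarrow> 0 < leaky_deriv \<alpha> z"
  by (simp add: leaky_deriv_def)

lemma loss_nonneg: "0 \<le> loss \<alpha> v S W"
  unfolding loss_def by (intro mult_nonneg_nonneg sum_list_nonneg) auto

lemma part1:
  fixes S :: "((real^'d) \<times> real) list" and W :: "real^'d^('k::finite + 'k)"
  assumes a: "0 < \<alpha>" and vp: "0 < v" and ne: "S \<noteq> []" and dS: "distinct S"
    and hw: "\<forall>(x, y)\<in>set S. y * (w \<bullet> x) \<ge> 1"
    and cp: "critical_point \<alpha> v S W"
  shows "loss \<alpha> v S W \<le> loss \<alpha> v S W'"
proof -
  define a0 :: "'k + 'k" where "a0 = Inl undefined"
  have oa: "outw v a0 = v" by (simp add: a0_def outw_def)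
  define g where "g = (\<lambda>(x::real^'d, y::real). (if y * net \<alpha> v W x < 1
        then (- y * outw v a0 * leaky_deriv \<alpha> (W $ a0 \<bullet> x)) *\<^sub>R x else 0))"
  have n0: "real (length S) \<noteq> 0" using ne by simp
  have "loss_grad \<alpha> v S W $ a0 = 0" using cp by (simp add: critical_point_def)
  hence "(1 / real (length S)) *\<^sub>R sum_list (map g S) = 0"
    unfolding loss_grad_def g_def by simp
  hence "sum_list (map g S) = 0" using n0 by simp
  hence s0: "sum g (set S) = 0" using dS by (simp add: sum_list_distinct_conv_sum_set)
  define h where "h = (\<lambda>(x::real^'d, y::real). (if y * net \<alpha> v W x < 1
        then v * leaky_deriv \<alpha> (W $ a0 \<bullet> x) * (y * (w \<bullet> x)) else 0))"
  have hg: "h p = - (w \<bullet> g p)" for p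
    by (cases p) (simp add: h_def g_def oa algebra_simps)
  have "sum h (set S) = - (w \<bullet> sum g (set S))"
    by (simp add: hg inner_sum_right sum_negf)
  hence sh: "sum h (set S) = 0" using s0 by simp
  have hn: "\<forall>p\<in>set S. 0 \<le> h p"
  proof
    fix p assume "p \<in> set S"
    then obtain x y where p: "p = (x, y)" "(x, y) \<in> set S" by (metis surj_pair)
    have "y * (w \<bullet> x) \<ge> 1" using hw p by auto
    thus "0 \<le> h p" using p vp leaky_deriv_pos[OF a, of "W $ a0 \<bullet> x"] by (simp add: h_def)
  qed
  have allz: "\<forall>p\<in>set S. h p = 0" using sum_nonneg_eq_0_iff[of "set S" h] hn sh by simp
  have mar: "\<forall>(x, y)\<in>set S. \<not> (y * net \<alpha> v W x < 1)"
  proof (intro ballI, clarify)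
    fix x y assume xy: "(x, y) \<in> set S" and lt: "y * net \<alpha> v W x < 1"
    have "y * (w \<bullet> x) \<ge> 1" using hw xy by auto
    hence "0 < v * leaky_deriv \<alpha> (W $ a0 \<bullet> x) * (y * (w \<bullet> x))"
      using vp leaky_deriv_pos[OF a, of "W $ a0 \<bullet> x"] by simp
    moreover have "h (x, y) = 0" using allz xy by auto
    moreover have "h (x, y) = v * leaky_deriv \<alpha> (W $ a0 \<bullet> x) * (y * (w \<bullet> x))"
      using lt by (simp add: h_def)
    ultimately show False by linarith
  qed
  have "loss \<alpha> v S W = 0"
  proof -
    have "map (\<lambda>(x, y). max (1 - y * net \<alpha> v W x) 0) S = map (\<lambda>_. 0) S"
      using mar by (intro map_cong) auto
    hence "(\<Sum>(x, y)\<leftarrow>S. max (1 - y * net \<alpha> v W x) 0) = sum_list (map (\<lambda>_. 0::real) S)"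
      by (simp only:)
    also have "\<dots> = 0" by (induct S) auto
    finally show ?thesis unfolding loss_def by simp
  qed
  thus ?thesis using loss_nonneg[of \<alpha> v S W'] by simp
qed


definition W2 :: "'k \<Rightarrow> real \<Rightarrow> real \<Rightarrow> real^'d \<Rightarrow> real^'d^('k::finite + 'k)" where
  "W2 a p q u = (\<chi> j. if j = Inl a then p *\<^sub>R u else if j = Inr a then q *\<^sub>R u else 0)"

lemma leaky0: "leaky \<alpha> 0 = 0" by (simp add: leaky_def)

lemma net_W2: "net \<alpha> v (W2 a p q u) x = v * leaky \<alpha> (p * (u \<bullet> x)) - v * leaky \<alpha> (q * (u \<bullet> x))"
proof -
  have "(\<lambda>j. outw v j * leaky \<alpha> (W2 a p q u $ j \<bullet> x)) =
        (\<lambda>j. (if j = Inl a then v * leaky \<alpha> (p * (u \<bullet> x)) else 0) +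
             (if j = Inr a then - v * leaky \<alpha> (q * (u \<bullet> x)) else 0))"
    by (rule ext) (auto simp: W2_def outw_def leaky0 split: sum.splits)
  note eq = this
  show ?thesis unfolding net_def eq by (simp add: sum.distrib)
qed

lemma W2_mid: "(1 - 1/2) *\<^sub>R W2 a p1 q1 u + (1/2) *\<^sub>R W2 a p2 q2 u = W2 a ((p1+p2)/2) ((q1+q2)/2) u"
  by (simp add: W2_def vec_eq_iff algebra_simps)

lemma leaky_pos: "0 \<le> z \<Longrightarrow> \<alpha> \<le> 1 \<Longrightarrow> leaky \<alpha> z = z"
proof -
  assume "0 \<le> z" "\<alpha> \<le> 1"
  hence "\<alpha> * z \<le> 1 * z" by (intro mult_right_mono) auto
  thus ?thesis unfolding leaky_def by simp
qed
lemma leaky_neg: "z \<le> 0 \<Longrightarrow> \<alpha> \<le> 1 \<Longrightarrow> leaky \<alpha> z = \<alpha> * z"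
proof -
  assume "z \<le> 0" "\<alpha> \<le> 1"
  hence "1 * z \<le> \<alpha> * z" by (intro mult_right_mono_neg) auto
  thus ?thesis unfolding leaky_def by simp
qed
lemma leaky_hom: "0 \<le> t \<Longrightarrow> leaky \<alpha> (p * t) = t * leaky \<alpha> p"
proof -
  assume "0 \<le> t"
  hence "t * max (\<alpha> * p) p = max (t * (\<alpha> * p)) (t * p)" using max_mult_distrib_left[of t "\<alpha> * p" p] by simp
  thus ?thesis unfolding leaky_def by (simp add: algebra_simps)
qed

lemma loss_zero:
  assumes "\<forall>(x, y)\<in>set S. 1 \<le> y * net \<alpha> v W x"
  shows "loss \<alpha> v S W = 0"
proof -
  have "map (\<lambda>(x, y). max (1 - y * net \<alpha> v W x) 0) S = map (\<lambda>_. 0) S"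
    using assms by (intro map_cong) auto
  hence "(\<Sum>(x, y)\<leftarrow>S. max (1 - y * net \<alpha> v W x) 0) = sum_list (map (\<lambda>_. 0::real) S)"
    by (simp only:)
  also have "\<dots> = 0" by (induct S) auto
  finally show ?thesis unfolding loss_def by simp
qed

lemma loss_pos:
  assumes "(x0, y0) \<in> set S" "y0 * net \<alpha> v W x0 < 1"
  shows "0 < loss \<alpha> v S W"
proof -
  let ?l = "map (\<lambda>(x, y). max (1 - y * net \<alpha> v W x) 0) S"
  have "(\<lambda>(x, y). max (1 - y * net \<alpha> v W x) 0) (x0, y0) \<in> set ?l"
    unfolding set_map using assms(1) by (rule imageI)
  hence "max (1 - y0 * net \<alpha> v W x0) 0 \<in> set ?l" by simp
  moreover have "\<forall>z\<in>set ?l. 0 \<le> z" by auto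
  ultimately have "max (1 - y0 * net \<alpha> v W x0) 0 \<le> sum_list ?l" by (intro member_le_sum_list) auto
  hence "0 < sum_list ?l" using assms(2) by linarith
  moreover have "S \<noteq> []" using assms(1) by auto
  ultimately show ?thesis unfolding loss_def by simp
qed

lemma margin_pos:
  assumes "0 \<le> \<alpha>" "\<alpha> \<le> 1" "1 \<le> t" "1 \<le> v * (leaky \<alpha> p - leaky \<alpha> q)"
  shows "1 \<le> 1 * (v * leaky \<alpha> (p * t) - v * leaky \<alpha> (q * t))"
proof -
  have "v * leaky \<alpha> (p * t) - v * leaky \<alpha> (q * t) = t * (v * (leaky \<alpha> p - leaky \<alpha> q))"
    using assms by (simp add: leaky_hom algebra_simps)
  also have "\<dots> \<ge> 1 * 1" using assms by (intro mult_mono) auto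
  finally show ?thesis by simp
qed

lemma margin_neg:
  assumes "0 \<le> \<alpha>" "\<alpha> \<le> 1" "t \<le> -1" "1 \<le> v * (leaky \<alpha> (-q) - leaky \<alpha> (-p))"
  shows "1 \<le> -1 * (v * leaky \<alpha> (p * t) - v * leaky \<alpha> (q * t))"
proof -
  have e1: "leaky \<alpha> (p * t) = (-t) * leaky \<alpha> (-p)" using leaky_hom[of "-t" \<alpha> "-p"] assms by simp
  have e2: "leaky \<alpha> (q * t) = (-t) * leaky \<alpha> (-q)" using leaky_hom[of "-t" \<alpha> "-q"] assms by simp
  have "-1 * (v * leaky \<alpha> (p * t) - v * leaky \<alpha> (q * t)) = (-t) * (v * (leaky \<alpha> (-q) - leaky \<alpha> (-p)))"
    unfolding e1 e2 by (simp add: algebra_simps)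
  also have "\<dots> \<ge> 1 * 1" using assms by (intro mult_mono) auto
  finally show ?thesis by simp
qed

lemma loss_W2_zero:
  assumes a: "0 < \<alpha>" "\<alpha> < 1"
    and hS: "\<forall>(x, y)\<in>set S. (y = 1 \<or> y = -1) \<and> 1 \<le> y * (u \<bullet> x)"
    and A: "1 \<le> v * (leaky \<alpha> p - leaky \<alpha> q)"
    and B: "1 \<le> v * (leaky \<alpha> (-q) - leaky \<alpha> (-p))"
  shows "loss \<alpha> v S (W2 a p q u) = 0"
proof (rule loss_zero, clarify)
  fix x y assume xy: "(x, y) \<in> set S"
  have "y = 1 \<or> y = -1" "1 \<le> y * (u \<bullet> x)" using hS xy by auto
  thus "1 \<le> y * net \<alpha> v (W2 a p q u) x"
  proof (elim disjE)
    assume "y = 1" thus ?thesis using margin_pos[of \<alpha> "u \<bullet> x" v p q] a A \<open>1 \<le> y * (u \<bullet> x)\<close>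
      by (simp add: net_W2)
  next
    assume "y = -1" thus ?thesis using margin_neg[of \<alpha> "u \<bullet> x" v q p] a B \<open>1 \<le> y * (u \<bullet> x)\<close>
      by (simp add: net_W2)
  qed
qed

lemma leaky_div: "0 < v \<Longrightarrow> leaky \<alpha> (z / v) = leaky \<alpha> z / v"
  using leaky_hom[of "1/v" \<alpha> z] by simp

lemma nonconvex_gen:
  fixes S :: "((real^'d) \<times> real) list" and u :: "real^'d"
  assumes a: "0 < \<alpha>" "\<alpha> < 1" and vp: "0 < v"
    and hS: "\<forall>(x, y)\<in>set S. (y = 1 \<or> y = -1) \<and> 1 \<le> y * (u \<bullet> x)"
    and A1: "1 \<le> leaky \<alpha> P1 - leaky \<alpha> Q1" and B1: "1 \<le> leaky \<alpha> (-Q1) - leaky \<alpha> (-P1)"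
    and A2: "1 \<le> leaky \<alpha> P2 - leaky \<alpha> Q2" and B2: "1 \<le> leaky \<alpha> (-Q2) - leaky \<alpha> (-P2)"
    and x0: "(x0, y0) \<in> set S"
    and mid: "y0 * net \<alpha> v (W2 (a::'k::finite) ((P1/v + P2/v)/2) ((Q1/v + Q2/v)/2) u) x0 < 1"
  shows "\<not> convex_on UNIV (loss \<alpha> v S :: real^'d^('k + 'k) \<Rightarrow> real)"
proof
  assume cv: "convex_on UNIV (loss \<alpha> v S :: real^'d^('k + 'k) \<Rightarrow> real)"
  have sc: "v * (leaky \<alpha> (X / v) - leaky \<alpha> (Y / v)) = leaky \<alpha> X - leaky \<alpha> Y" for X Y
    using vp by (simp add: leaky_div field_simps)
  have ng: "- (X / v) = (- X) / v" for X by simp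
  have z1: "loss \<alpha> v S (W2 a (P1/v) (Q1/v) u) = 0"
    by (rule loss_W2_zero[OF a hS]) (simp_all only: sc ng A1 B1)
  have z2: "loss \<alpha> v S (W2 a (P2/v) (Q2/v) u) = 0"
    by (rule loss_W2_zero[OF a hS]) (simp_all only: sc ng A2 B2)
  have "loss \<alpha> v S ((1 - 1/2) *\<^sub>R W2 a (P1/v) (Q1/v) u + (1/2) *\<^sub>R W2 a (P2/v) (Q2/v) u)
        \<le> (1 - 1/2) * loss \<alpha> v S (W2 a (P1/v) (Q1/v) u) + (1/2) * loss \<alpha> v S (W2 a (P2/v) (Q2/v) u)"
    by (rule convex_onD[OF cv]) auto
  hence "loss \<alpha> v S (W2 a ((P1/v + P2/v)/2) ((Q1/v + Q2/v)/2) u) \<le> 0"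
    unfolding W2_mid z1 z2 by simp
  moreover have "0 < loss \<alpha> v S (W2 a ((P1/v + P2/v)/2) ((Q1/v + Q2/v)/2) u)"
    by (rule loss_pos[OF x0 mid])
  ultimately show False by simp
qed


lemma nums:
  assumes a: "0 < \<alpha>" "\<alpha> < 1"
  shows N1: "1 \<le> leaky \<alpha> (-1/2) - leaky \<alpha> (-1/2 - 1/\<alpha>)"
    and N2: "1 \<le> leaky \<alpha> (1/2 + 1/\<alpha>) - leaky \<alpha> (1/2)"
    and N3: "1 \<le> leaky \<alpha> (1/2) - leaky \<alpha> (-1/(2*\<alpha>))"
    and N4: "1 \<le> leaky \<alpha> (1/(2*\<alpha>)) - leaky \<alpha> (-1/2)"
    and N5: "- leaky \<alpha> (((-1/2 - 1/\<alpha>) + (-1/(2*\<alpha>)))/2) < 1"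
proof -
  have ia: "0 < 1/\<alpha>" "1 \<le> 1/\<alpha>" using a by auto
  have al: "\<alpha> \<le> 1" using a by simp
  have e1: "leaky \<alpha> (-1/2) = \<alpha> * (-1/2)" by (rule leaky_neg[OF _ al]) simp
  have e2: "leaky \<alpha> (-1/2 - 1/\<alpha>) = \<alpha> * (-1/2 - 1/\<alpha>)" by (rule leaky_neg[OF _ al]) (use ia in linarith)
  have "\<alpha> * (-1/2) - \<alpha> * (-1/2 - 1/\<alpha>) = 1" using a by (simp add: field_simps)
  thus "1 \<le> leaky \<alpha> (-1/2) - leaky \<alpha> (-1/2 - 1/\<alpha>)" unfolding e1 e2 by simp
  have e3: "leaky \<alpha> (1/2) = 1/2" by (rule leaky_pos[OF _ al]) simp
  have e4: "leaky \<alpha> (1/2 + 1/\<alpha>) = 1/2 + 1/\<alpha>" by (rule leaky_pos[OF _ al]) (use ia in simp)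
  show "1 \<le> leaky \<alpha> (1/2 + 1/\<alpha>) - leaky \<alpha> (1/2)" unfolding e3 e4 using ia by linarith
  have e5: "leaky \<alpha> (-1/(2*\<alpha>)) = \<alpha> * (-1/(2*\<alpha>))" by (rule leaky_neg[OF _ al]) (use a in simp)
  have "\<alpha> * (-1/(2*\<alpha>)) = -1/2" using a by (simp add: field_simps)
  thus "1 \<le> leaky \<alpha> (1/2) - leaky \<alpha> (-1/(2*\<alpha>))" unfolding e3 e5 by simp
  have e6: "leaky \<alpha> (1/(2*\<alpha>)) = 1/(2*\<alpha>)" by (rule leaky_pos[OF _ al]) (use a in simp)
  have "1 \<le> 1/(2*\<alpha>) + \<alpha>/2"
  proof -
    have "0 \<le> (1 - \<alpha>)^2" by simp
    hence "2 * \<alpha> \<le> 1 + \<alpha>^2" by (simp add: power2_eq_square algebra_simps)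
    thus ?thesis using a by (simp add: field_simps power2_eq_square)
  qed
  thus "1 \<le> leaky \<alpha> (1/(2*\<alpha>)) - leaky \<alpha> (-1/2)" unfolding e6 e1 by simp
  have hh: "-1/(2*\<alpha>) < 0" by (rule divide_neg_pos) (use a in simp_all)
  have "-1/2 - 1/\<alpha> < 0" using ia(1) by linarith
  hence "(-1/2 - 1/\<alpha>) + -1/(2*\<alpha>) < 0" using hh by (rule add_neg_neg)
  hence sg: "(-1/2 - 1/\<alpha> + -1/(2*\<alpha>))/2 \<le> 0" by (intro divide_nonpos_pos) auto
  have e7: "leaky \<alpha> (((-1/2 - 1/\<alpha>) + (-1/(2*\<alpha>)))/2) = \<alpha> * (((-1/2 - 1/\<alpha>) + (-1/(2*\<alpha>)))/2)"
    by (rule leaky_neg[OF sg al])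
  have "\<alpha> * (((-1/2 - 1/\<alpha>) + (-1/(2*\<alpha>)))/2) = - (\<alpha>/4 + 3/4)"
    using a by (simp add: field_simps)
  thus "- leaky \<alpha> (((-1/2 - 1/\<alpha>) + (-1/(2*\<alpha>)))/2) < 1" unfolding e7 using a by simp
qed


lemma part2:
  fixes S :: "((real^'d) \<times> real) list" and \<alpha> v :: real
  assumes a: "0 < \<alpha>" "\<alpha> < 1" and vp: "0 < v" and ne: "S \<noteq> []"
    and lab: "\<forall>(x, y)\<in>set S. norm x \<le> 1 \<and> (y = 1 \<or> y = -1)"
    and sep: "\<exists>w. \<forall>(x, y)\<in>set S. y * (w \<bullet> x) \<ge> 1"
  shows "\<not> convex_on UNIV (loss \<alpha> v S :: real^'d^('k::finite + 'k) \<Rightarrow> real)"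
proof -
  obtain w where hw: "\<forall>(x, y)\<in>set S. y * (w \<bullet> x) \<ge> 1" using sep by blast
  define f where "f = (\<lambda>(x::real^'d, y::real). y * (w \<bullet> x))"
  define m where "m = Min (f ` set S)"
  have fin: "finite (f ` set S)" and nee: "f ` set S \<noteq> {}" using ne by auto
  have "m \<in> f ` set S" unfolding m_def using fin nee by (rule Min_in)
  then obtain x0 y0 where x0: "(x0, y0) \<in> set S" and fm: "f (x0, y0) = m" by auto
  have m1: "1 \<le> m" using hw x0 fm by (auto simp: f_def)
  have mle: "m \<le> y * (w \<bullet> x)" if "(x, y) \<in> set S" for x y
  proof -
    have "m \<le> f (x, y)" unfolding m_def using fin that by (intro Min_le) auto
    thus ?thesis by (simp add: f_def)
  qed
  define u where "u = (1/m) *\<^sub>R w"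
  have uy: "y * (u \<bullet> x) = y * (w \<bullet> x) / m" for x y by (simp add: u_def)
  have hS: "\<forall>(x, y)\<in>set S. (y = 1 \<or> y = -1) \<and> 1 \<le> y * (u \<bullet> x)"
  proof (intro ballI, clarify)
    fix x y assume xy: "(x, y) \<in> set S"
    have "m \<le> y * (w \<bullet> x)" using mle xy .
    hence "1 \<le> y * (w \<bullet> x) / m" using m1 by simp
    thus "(y = 1 \<or> y = -1) \<and> 1 \<le> y * (u \<bullet> x)" using lab xy uy by auto
  qed
  have u0: "y0 * (u \<bullet> x0) = 1" using fm m1 uy[of y0 x0] by (simp add: f_def)
  have y0: "y0 = 1 \<or> y0 = -1" using lab x0 by auto
  define a0 :: 'k where "a0 = undefined"
  note N = nums[OF a]
  show ?thesis
  proof (cases "y0 = 1")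
    case True
    hence t0: "u \<bullet> x0 = 1" using u0 by simp
    define Qm where "Qm = ((-1/2 - 1/\<alpha>) + (-1/(2*\<alpha>)))/2"
    have e1: "((-1/2)/v + (1/2)/v)/2 = 0" by simp
    have e2: "((-1/2 - 1/\<alpha>)/v + (-1/(2*\<alpha>))/v)/2 = Qm / v" unfolding Qm_def using a vp by (simp add: field_simps)
    have "y0 * net \<alpha> v (W2 a0 (((-1/2)/v + (1/2)/v)/2) (((-1/2 - 1/\<alpha>)/v + (-1/(2*\<alpha>))/v)/2) u) x0
          = - leaky \<alpha> Qm"
      unfolding e1 e2 net_W2 t0 using True vp by (simp add: leaky0 leaky_div)
    hence mid: "y0 * net \<alpha> v (W2 a0 (((-1/2)/v + (1/2)/v)/2) (((-1/2 - 1/\<alpha>)/v + (-1/(2*\<alpha>))/v)/2) u) x0 < 1"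
      using N(5) unfolding Qm_def by simp
    show ?thesis
      by (rule nonconvex_gen[OF a vp hS _ _ _ _ x0 mid]) (use N in \<open>simp_all add: add_ac\<close>)
  next
    case False
    hence y0m: "y0 = -1" using y0 by simp
    hence t0: "u \<bullet> x0 = -1" using u0 by simp
    define Pm where "Pm = ((1/2 + 1/\<alpha>) + 1/(2*\<alpha>))/2"
    have e1: "((1/2)/v + (-1/2)/v)/2 = 0" by simp
    have e2: "((1/2 + 1/\<alpha>)/v + (1/(2*\<alpha>))/v)/2 = Pm / v" unfolding Pm_def using a vp by (simp add: field_simps)
    have e3: "- Pm = ((-1/2 - 1/\<alpha>) + (-1/(2*\<alpha>)))/2" unfolding Pm_def using a vp by (simp add: field_simps)
    have "y0 * net \<alpha> v (W2 a0 (((1/2 + 1/\<alpha>)/v + (1/(2*\<alpha>))/v)/2) (((1/2)/v + (-1/2)/v)/2) u) x0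
          = - leaky \<alpha> (- Pm)"
      unfolding e1 e2 net_W2 t0 using y0m vp leaky_div[OF vp, of \<alpha> "- Pm"] by (simp add: leaky0 leaky_div minus_divide_left[symmetric])
    hence mid: "y0 * net \<alpha> v (W2 a0 (((1/2 + 1/\<alpha>)/v + (1/(2*\<alpha>))/v)/2) (((1/2)/v + (-1/2)/v)/2) u) x0 < 1"
      using N(5) unfolding e3 by simp
    have g1: "1 \<le> leaky \<alpha> (- (1/2)) - leaky \<alpha> (- (1/2 + 1/\<alpha>))"
    proof -
      have "- (1/2 + 1/\<alpha>) = -1/2 - 1/\<alpha>" "- (1/2) = (-1/2::real)" by simp_all
      thus ?thesis using N(1) by (simp only:)
    qed
    have g2: "1 \<le> leaky \<alpha> (- (-1/2)) - leaky \<alpha> (- (1/(2*\<alpha>)))"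
    proof -
      have "- (-1/2) = (1/2::real)" "- (1/(2*\<alpha>)) = -1/(2*\<alpha>)" by simp_all
      thus ?thesis using N(3) by (simp only:)
    qed
    show ?thesis
      by (rule nonconvex_gen[OF a vp hS N(2) g1 N(4) g2 x0 mid])
  qed
qed


theorem proposition1:
  fixes S :: "((real^'d) \<times> real) list" and \<alpha> v :: real
  assumes "0 < \<alpha>" and "\<alpha> < 1" and "0 < v"
    and "S \<noteq> []" and "distinct S"
    and "\<forall>(x, y)\<in>set S. norm x \<le> 1 \<and> (y = 1 \<or> y = -1)"
    and "\<exists>w. \<forall>(x, y)\<in>set S. y * (w \<bullet> x) \<ge> 1"
  shows "(\<forall>W :: real^'d^('k::finite + 'k). critical_point \<alpha> v S W \<longrightarrow>
            (\<forall>W' :: real^'d^('k + 'k). loss \<alpha> v S W \<le> loss \<alpha> v S W'))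
         \<and> \<not> convex_on UNIV (loss \<alpha> v S :: real^'d^('k + 'k) \<Rightarrow> real)"
proof
  obtain w where hw: "\<forall>(x, y)\<in>set S. y * (w \<bullet> x) \<ge> 1" using assms(7) by blast
  show "\<forall>W :: real^'d^('k::finite + 'k). critical_point \<alpha> v S W \<longrightarrow>
            (\<forall>W' :: real^'d^('k + 'k). loss \<alpha> v S W \<le> loss \<alpha> v S W')"
    using part1[OF assms(1) assms(3) assms(4) assms(5) hw] by blast
  show "\<not> convex_on UNIV (loss \<alpha> v S :: real^'d^('k + 'k) \<Rightarrow> real)"
    by (rule part2[OF assms(1) assms(2) assms(3) assms(4) assms(6) assms(7)])
qed

end
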